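(* (i) If $\alpha\le\frac12$, then $\theta(y;\alpha,\lambda)=1$ for all $y\ge0$ and all $\lambda>0$. (ii) If $\alpha>\frac12$, then $\theta(y;\alpha,\lambda)<1$ for all $y\ge0$ and all $\lambda>0$.
   Context: For a countable set $P\subseteq\mathbb R\times[0,\infty)$, $\Gamma(P)$ denotes the graph on vertex set $P$ in which distinct points $(x,y),(x',y')$ are adjacent iff $|x-x'|<e^{\frac12(y+y')}$. For $\alpha,\lambda>0$, $\mathcal P_{\alpha,\lambda}$ is a Poisson point process on $\mathbb R\times[0,\infty)$ with intensity function $\lambda e^{-\alpha y}$. For $y\ge 0$, $\theta(y;\alpha,\lambda)$ is the probability that $\Gamma(\{(0,y)\}\cup\mathcal P_{\alpha,\lambda})$ contains an infinite connected component containing $(0,y)$. *)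

theory Defs
  imports "HOL-Probability.Probability"
begin

definition gamma_adj :: "real \<times> real \<Rightarrow> real \<times> real \<Rightarrow> bool" where
  "gamma_adj p q \<longleftrightarrow> p \<noteq> q \<and> \<bar>fst p - fst q\<bar> < exp ((snd p + snd q) / 2)"

definition gamma_edges :: "(real \<times> real) set \<Rightarrow> ((real \<times> real) \<times> (real \<times> real)) set" where
  "gamma_edges V = {(p, q). p \<in> V \<and> q \<in> V \<and> gamma_adj p q}"

definition gamma_component :: "(real \<times> real) set \<Rightarrow> real \<times> real \<Rightarrow> (real \<times> real) set" where
  "gamma_component V v = {w. (v, w) \<in> (gamma_edges V)\<^sup>*}"

definition intensity :: "real \<Rightarrow> real \<Rightarrow> (real \<times> real) measure" where
  "intensity \<alpha> lam = density lborel
     (\<lambda>p. ennreal (if snd p \<ge> 0 then lam * exp (- \<alpha> * snd p) else 0))"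

definition poisson_pp :: "'a measure \<Rightarrow> real \<Rightarrow> real \<Rightarrow> ('a \<Rightarrow> (real \<times> real) set) \<Rightarrow> bool" where
  "poisson_pp M \<alpha> lam P \<longleftrightarrow>
     (\<forall>\<omega>\<in>space M. P \<omega> \<subseteq> UNIV \<times> {0..}) \<and>
     (\<forall>A \<in> sets borel. emeasure (intensity \<alpha> lam) A < \<infinity> \<longrightarrow>
        (AE \<omega> in M. finite (P \<omega> \<inter> A)) \<and>
        (\<lambda>\<omega>. card (P \<omega> \<inter> A)) \<in> measurable M (count_space UNIV) \<and>
        (\<forall>k::nat. measure M {\<omega> \<in> space M. card (P \<omega> \<inter> A) = k} =
            measure (intensity \<alpha> lam) A ^ k / fact k * exp (- measure (intensity \<alpha> lam) A))) \<and>
     (\<forall>(I::nat set) (A::nat \<Rightarrow> (real \<times> real) set). finite I \<longrightarrow>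
        (\<forall>i\<in>I. A i \<in> sets borel \<and> emeasure (intensity \<alpha> lam) (A i) < \<infinity>) \<longrightarrow>
        disjoint_family_on A I \<longrightarrow>
        prob_space.indep_vars M (\<lambda>_. count_space UNIV) (\<lambda>i \<omega>. card (P \<omega> \<inter> A i)) I)"

end

theory Submission imports Defs "HOL-Real_Asymp.Real_Asymp" begin

definition nb :: "real \<Rightarrow> real set \<Rightarrow> (real \<times> real) set" where
  "nb y S = {p. snd p \<in> S \<and> \<bar>fst p\<bar> < exp ((y + snd p)/2)}"

lemma nb_sets[measurable]: "S \<in> sets borel \<Longrightarrow> nb y S \<in> sets borel"
proof -
  assume [measurable]: "S \<in> sets borel"
  have "{p \<in> space (borel \<Otimes>\<^sub>M borel). snd p \<in> S \<and> \<bar>fst p\<bar> < exp ((y + snd p)/2)} \<in> sets (borel \<Otimes>\<^sub>M borel)" by measurable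
  then show ?thesis unfolding nb_def borel_prod space_borel by simp
qed

lemma dens_meas[measurable]: "(\<lambda>p::real\<times>real. ennreal (if 0 \<le> snd p then lam * exp (- \<alpha> * snd p) else 0)) \<in> borel_measurable borel"
proof -
  have "(\<lambda>p::real\<times>real. ennreal (if 0 \<le> snd p then lam * exp (- \<alpha> * snd p) else 0)) \<in> borel_measurable (borel \<Otimes>\<^sub>M borel)" by measurable
  then show ?thesis by (simp add: borel_prod)
qed

lemma nb_meas:
  assumes S: "S \<in> sets borel"
  shows "emeasure (intensity \<alpha> lam) (nb y S) =
    (\<integral>\<^sup>+t. ennreal (indicator S t * (if t \<ge> 0 then lam * exp (- \<alpha> * t) else 0) * (2 * exp ((y+t)/2))) \<partial>lborel)"
proof -
  let ?f = "\<lambda>p::real\<times>real. ennreal (if snd p \<ge> 0 then lam * exp (- \<alpha> * snd p) else 0) * indicator (nb y S) p"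
  have "emeasure (intensity \<alpha> lam) (nb y S) = (\<integral>\<^sup>+p. ?f p \<partial>lborel)"
    unfolding intensity_def using S by (subst emeasure_density) auto
  also have "\<dots> = (\<integral>\<^sup>+p. ?f p \<partial>(lborel \<Otimes>\<^sub>M lborel))" by (simp add: lborel_prod)
  also have "\<dots> = (\<integral>\<^sup>+t. (\<integral>\<^sup>+x. ?f (x,t) \<partial>lborel) \<partial>lborel)"
    using S by (subst lborel_pair.nn_integral_snd[symmetric]) (auto simp: lborel_prod)
  also have "\<dots> = (\<integral>\<^sup>+t. ennreal (indicator S t * (if t \<ge> 0 then lam * exp (- \<alpha> * t) else 0) * (2 * exp ((y+t)/2))) \<partial>lborel)"
  proof (rule nn_integral_cong)
    fix t :: real
    have "(\<integral>\<^sup>+x. ?f (x,t) \<partial>lborel) = (\<integral>\<^sup>+x. ennreal (if t \<ge> 0 then lam * exp (- \<alpha> * t) else 0) * indicator S t * indicator {- exp ((y+t)/2) <..< exp ((y+t)/2)} x \<partial>lborel)"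
      by (rule nn_integral_cong) (auto simp: nb_def indicator_def abs_less_iff)
    also have "\<dots> = ennreal (if t \<ge> 0 then lam * exp (- \<alpha> * t) else 0) * indicator S t * (2 * exp ((y+t)/2))"
      by (subst nn_integral_cmult) auto
    finally show "(\<integral>\<^sup>+x. ?f (x,t) \<partial>lborel) = ennreal (indicator S t * (if t \<ge> 0 then lam * exp (- \<alpha> * t) else 0) * (2 * exp ((y+t)/2)))"
      by (cases "t \<in> S") (auto simp: ennreal_mult' ennreal_mult'' mult_ac)
  qed
  finally show ?thesis .
qed
lemma pp_facts:
  assumes "poisson_pp M \<alpha> lam P" "A \<in> sets borel" "emeasure (intensity \<alpha> lam) A < \<infinity>"
  shows "AE \<omega> in M. finite (P \<omega> \<inter> A)"
    "(\<lambda>\<omega>. card (P \<omega> \<inter> A)) \<in> measurable M (count_space UNIV)"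
    "measure M {\<omega> \<in> space M. card (P \<omega> \<inter> A) = k} =
            measure (intensity \<alpha> lam) A ^ k / fact k * exp (- measure (intensity \<alpha> lam) A)"
  using assms unfolding poisson_pp_def by blast+

lemma comp_sub: "P \<inter> nb y S \<subseteq> gamma_component (insert (0,y) P) (0,y)"
proof
  fix q assume q: "q \<in> P \<inter> nb y S"
  show "q \<in> gamma_component (insert (0,y) P) (0,y)"
  proof (cases "q = (0,y)")
    case True then show ?thesis by (simp add: gamma_component_def)
  next
    case False
    then have "((0,y),q) \<in> gamma_edges (insert (0,y) P)"
      using q by (auto simp: gamma_edges_def gamma_adj_def nb_def)
    then show ?thesis unfolding gamma_component_def by auto
  qed
qed

lemma comp_single:
  assumes "P \<inter> nb y UNIV = {}"
  shows "gamma_component (insert (0,y) P) (0,y) = {(0,y)}"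
proof -
  have "w = (0,y)" if "((0,y), w) \<in> (gamma_edges (insert (0,y) P))\<^sup>*" for w
    using that
  proof (induction rule: rtrancl_induct)
    case base then show ?case by simp
  next
    case (step z w)
    then have "((0,y), w) \<in> gamma_edges (insert (0,y) P)" by simp
    then show ?case using assms by (auto simp: gamma_edges_def gamma_adj_def nb_def)
  qed
  then show ?thesis by (auto simp: gamma_component_def)
qed

lemma nb_fin_ii:
  assumes "\<alpha> > 1/2" "lam > 0"
  shows "emeasure (intensity \<alpha> lam) (nb y UNIV) < \<infinity>"
proof -
  define l where "l = \<alpha> - 1/2"
  have l: "l > 0" using assms by (simp add: l_def)
  define c where "c = 2 * lam * exp (y/2) / l"
  have "emeasure (intensity \<alpha> lam) (nb y UNIV) = (\<integral>\<^sup>+t. ennreal c * ennreal (exponential_density l t) \<partial>lborel)"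
  proof (subst nb_meas, simp, rule nn_integral_cong)
    fix t :: real
    have "lam * exp (- \<alpha> * t) * (2 * exp ((y + t) / 2)) = c * (l * exp (- t * l))"
      using l unfolding c_def l_def by (simp add: exp_add[symmetric] field_simps mult_exp_exp)
    then show "ennreal (indicator UNIV t * (if 0 \<le> t then lam * exp (- \<alpha> * t) else 0) * (2 * exp ((y + t) / 2))) =
         ennreal c * ennreal (exponential_density l t)"
      using l assms unfolding c_def by (auto simp: exponential_density_def ennreal_mult'[symmetric])
  qed
  also have "\<dots> = ennreal c * (\<integral>\<^sup>+t. ennreal (exponential_density l t) \<partial>lborel)"
    by (rule nn_integral_cmult) simp
  also have "(\<integral>\<^sup>+t. ennreal (exponential_density l t) \<partial>lborel) = emeasure (density lborel (exponential_density l)) UNIV"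
    by (subst emeasure_density) auto
  also have "\<dots> = 1"
    using prob_space.emeasure_space_1[OF prob_space_exponential_density[OF l]] by simp
  finally show ?thesis by simp
qed

lemma nb_bounds_i:
  assumes "\<alpha> \<le> 1/2" "\<alpha> > 0" "lam > 0" "y \<ge> 0" "n \<ge> 0"
  shows "emeasure (intensity \<alpha> lam) (nb y {0..n}) < \<infinity>"
    "emeasure (intensity \<alpha> lam) (nb y {0..n}) \<ge> ennreal (2 * lam * n)"
proof -
  have "emeasure (intensity \<alpha> lam) (nb y {0..n}) \<le> (\<integral>\<^sup>+t. ennreal (2 * lam * exp ((y+n)/2)) * indicator {0..n} t \<partial>lborel)"
  proof (subst nb_meas, simp, rule nn_integral_mono)
    fix t :: real
    have "ennreal (lam * exp (- \<alpha> * t) * (2 * exp ((y + t) / 2))) \<le> ennreal (2 * lam * exp ((y+n)/2))" if "0 \<le> t" "t \<le> n"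
    proof (rule ennreal_leI)
      have "exp (- \<alpha> * t) \<le> 1" using that assms by simp
      moreover have "exp ((y + t) / 2) \<le> exp ((y+n)/2)" using that by simp
      ultimately have "exp (- \<alpha> * t) * exp ((y + t) / 2) \<le> 1 * exp ((y+n)/2)"
        by (intro mult_mono) auto
      then show "lam * exp (- \<alpha> * t) * (2 * exp ((y + t) / 2)) \<le> 2 * lam * exp ((y+n)/2)" using assms by (simp add: algebra_simps)
    qed
    then show "ennreal (indicator {0..n} t * (if 0 \<le> t then lam * exp (- \<alpha> * t) else 0) * (2 * exp ((y + t) / 2)))
         \<le> ennreal (2 * lam * exp ((y+n)/2)) * indicator {0..n} t"
      by (auto simp: indicator_def)
  qed
  also have "\<dots> = ennreal (2 * lam * exp ((y+n)/2)) * ennreal n"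
    using assms by (subst nn_integral_cmult_indicator) auto
  finally have le: "emeasure (intensity \<alpha> lam) (nb y {0..n}) \<le> ennreal (2 * lam * exp ((y+n)/2)) * ennreal n" .
  have "ennreal (2 * lam * exp ((y+n)/2)) * ennreal n < \<infinity>" by (simp add: ennreal_mult_less_top)
  with le show "emeasure (intensity \<alpha> lam) (nb y {0..n}) < \<infinity>" by (rule le_less_trans)
  have "(\<integral>\<^sup>+t. ennreal (2 * lam) * indicator {0..n} t \<partial>lborel) \<le> emeasure (intensity \<alpha> lam) (nb y {0..n})"
  proof (subst nb_meas, simp, rule nn_integral_mono)
    fix t :: real
    have "ennreal (2 * lam) \<le> ennreal (lam * exp (- \<alpha> * t) * (2 * exp ((y + t) / 2)))" if "0 \<le> t" "t \<le> n"
    proof (rule ennreal_leI)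
      have "exp (- \<alpha> * t) * exp ((y + t) / 2) = exp (y/2 + (1/2 - \<alpha>) * t)"
        by (simp add: mult_exp_exp algebra_simps add_divide_distrib)
      also have "\<dots> \<ge> 1" using that assms by simp
      finally show "2 * lam \<le> lam * exp (- \<alpha> * t) * (2 * exp ((y + t) / 2))" using assms by (simp add: algebra_simps)
    qed
    then show "ennreal (2 * lam) * indicator {0..n} t \<le> ennreal (indicator {0..n} t * (if 0 \<le> t then lam * exp (- \<alpha> * t) else 0) * (2 * exp ((y + t) / 2)))"
      by (auto simp: indicator_def)
  qed
  moreover have "(\<integral>\<^sup>+t. ennreal (2 * lam) * indicator {0..n} t \<partial>lborel) = ennreal (2 * lam * n)"
    using assms by (subst nn_integral_cmult_indicator) (auto simp: ennreal_mult)
  ultimately show "emeasure (intensity \<alpha> lam) (nb y {0..n}) \<ge> ennreal (2 * lam * n)" by simp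
qed

lemma poisson_tail_lim:
  fixes m :: "nat \<Rightarrow> real"
  assumes "filterlim m at_top sequentially"
  shows "(\<lambda>n. \<Sum>j<k. m n ^ j / fact j * exp (- m n)) \<longlonglongrightarrow> 0"
proof -
  have "((\<lambda>n. m n ^ j / fact j * exp (- m n)) \<longlongrightarrow> 0) sequentially" for j
  proof -
    have "((\<lambda>x::real. x ^ j / fact j * exp (- x)) \<longlongrightarrow> 0) at_top" by real_asymp
    from filterlim_compose[OF this assms] show ?thesis by simp
  qed
  then show ?thesis by (intro tendsto_null_sum) auto
qed

lemma part_i:
  fixes \<alpha> lam y :: real and M :: "'a measure"
  assumes "\<alpha> > 0" "lam > 0" "\<alpha> \<le> 1/2" "y \<ge> 0" "prob_space M" and pp: "poisson_pp M \<alpha> lam P"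
  shows "AE \<omega> in M. infinite (gamma_component (insert (0, y) (P \<omega>)) (0, y))"
proof -
  interpret prob_space M by fact
  define A where "A n = nb y {0..real n}" for n
  have As[measurable]: "A n \<in> sets borel" for n unfolding A_def by measurable
  have Afin: "emeasure (intensity \<alpha> lam) (A n) < \<infinity>" for n
    unfolding A_def using nb_bounds_i(1)[of \<alpha> lam y "real n"] assms by simp
  define m where "m n = measure (intensity \<alpha> lam) (A n)" for n
  have mge: "m n \<ge> 2 * lam * real n" for n
  proof -
    have "ennreal (2 * lam * real n) \<le> emeasure (intensity \<alpha> lam) (A n)"
      unfolding A_def using nb_bounds_i(2)[of \<alpha> lam y "real n"] assms by simp
    also have "\<dots> = ennreal (m n)" unfolding m_def using Afin[of n]
      by (simp add: emeasure_eq_ennreal_measure less_top)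
    finally show ?thesis using ennreal_le_iff assms by (metis measure_nonneg m_def)
  qed
  have mlim: "filterlim m at_top sequentially"
  proof (rule filterlim_at_top_mono[OF _ always_eventually])
    show "filterlim (\<lambda>n. 2 * lam * real n) at_top sequentially"
      using assms by (intro filterlim_tendsto_pos_mult_at_top[OF tendsto_const]) (auto simp: filterlim_real_sequentially)
  qed (use mge in auto)
  have cardm[measurable]: "(\<lambda>\<omega>. card (P \<omega> \<inter> A n)) \<in> measurable M (count_space UNIV)" for n
    using pp_facts(2)[OF pp As Afin] .
  have pk: "measure M {\<omega> \<in> space M. card (P \<omega> \<inter> A n) = j} = m n ^ j / fact j * exp (- m n)" for n j
    using pp_facts(3)[OF pp As Afin] unfolding m_def .
  define E where "E k = {\<omega> \<in> space M. \<forall>n. card (P \<omega> \<inter> A n) < k}" for k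
  have Es: "E k \<in> sets M" for k unfolding E_def by measurable
  have Ele: "measure M (E k) \<le> (\<Sum>j<k. m n ^ j / fact j * exp (- m n))" for k n
  proof -
    have "E k \<subseteq> (\<Union>j\<in>{..<k}. {\<omega> \<in> space M. card (P \<omega> \<inter> A n) = j})"
      unfolding E_def by auto
    then have "measure M (E k) \<le> measure M (\<Union>j\<in>{..<k}. {\<omega> \<in> space M. card (P \<omega> \<inter> A n) = j})"
      by (intro finite_measure_mono) auto
    also have "\<dots> \<le> (\<Sum>j<k. measure M {\<omega> \<in> space M. card (P \<omega> \<inter> A n) = j})"
      by (intro finite_measure_subadditive_finite) auto
    finally show ?thesis by (simp add: pk)
  qed
  have E0: "measure M (E k) = 0" for k
  proof -
    have "measure M (E k) \<le> 0"
      using poisson_tail_lim[OF mlim, of k] Ele[of k]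
      by (intro tendsto_lowerbound[OF poisson_tail_lim[OF mlim, of k]]) (auto intro: always_eventually)
    then show ?thesis using measure_nonneg[of M "E k"] by linarith
  qed
  have "AE \<omega> in M. \<omega> \<notin> E k" for k
    using Es E0 by (intro AE_not_in) (simp add: null_sets_def emeasure_eq_measure)
  then have AE1: "AE \<omega> in M. \<forall>k. \<omega> \<notin> E k" by (simp add: AE_all_countable)
  have "AE \<omega> in M. finite (P \<omega> \<inter> A n)" for n using pp_facts(1)[OF pp As Afin] .
  then have AE2: "AE \<omega> in M. \<forall>n. finite (P \<omega> \<inter> A n)" by (simp add: AE_all_countable)
  show ?thesis
    using AE1 AE2 AE_space
  proof eventually_elim
    case (elim \<omega>)
    show ?case
    proof
      assume fin: "finite (gamma_component (insert (0, y) (P \<omega>)) (0, y))"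
      define d where "d = card (gamma_component (insert (0, y) (P \<omega>)) (0, y))"
      from elim have "\<omega> \<notin> E (Suc d)" by blast
      then obtain n where n: "\<not> card (P \<omega> \<inter> A n) < Suc d" using elim unfolding E_def by auto
      have "card (P \<omega> \<inter> A n) \<le> d"
        unfolding d_def A_def by (intro card_mono fin comp_sub)
      with n show False by simp
    qed
  qed
qed

lemma part_ii:
  fixes \<alpha> lam y :: real and M :: "'a measure"
  assumes "\<alpha> > 1/2" "lam > 0" "prob_space M" and pp: "poisson_pp M \<alpha> lam P"
  shows "\<not> (AE \<omega> in M. infinite (gamma_component (insert (0, y) (P \<omega>)) (0, y)))"
proof
  interpret prob_space M by fact
  define N where "N = nb y UNIV"
  have Ns[measurable]: "N \<in> sets borel" unfolding N_def by measurable
  have Nfin: "emeasure (intensity \<alpha> lam) N < \<infinity>" unfolding N_def using nb_fin_ii assms by blast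
  have cardm[measurable]: "(\<lambda>\<omega>. card (P \<omega> \<inter> N)) \<in> measurable M (count_space UNIV)"
    using pp_facts(2)[OF pp Ns Nfin] .
  define Z where "Z = {\<omega> \<in> space M. card (P \<omega> \<inter> N) = 0}"
  have Zs: "Z \<in> sets M" unfolding Z_def by measurable
  have "measure M Z = exp (- measure (intensity \<alpha> lam) N)"
    using pp_facts(3)[OF pp Ns Nfin, of 0] unfolding Z_def by simp
  then have Zpos: "measure M Z > 0" by simp
  assume inf: "AE \<omega> in M. infinite (gamma_component (insert (0, y) (P \<omega>)) (0, y))"
  have "AE \<omega> in M. \<omega> \<notin> Z"
    using inf pp_facts(1)[OF pp Ns Nfin]
  proof eventually_elim
    case (elim \<omega>)
    show ?case
    proof
      assume "\<omega> \<in> Z"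
      then have "P \<omega> \<inter> N = {}" using elim unfolding Z_def by auto
      then have "gamma_component (insert (0, y) (P \<omega>)) (0, y) = {(0,y)}"
        unfolding N_def by (rule comp_single)
      with elim show False by simp
    qed
  qed
  then have "emeasure M Z = 0"
    using Zs by (subst (asm) AE_iff_measurable[of Z]) (auto simp: Z_def)
  with Zpos show False by (simp add: emeasure_eq_measure)
qed


theorem lemma2p6:
  fixes \<alpha> lam :: real
  assumes "\<alpha> > 0" and "lam > 0"
  shows "(\<alpha> \<le> 1/2 \<longrightarrow>
            (\<forall>y \<ge> 0. \<forall>(M :: 'a measure) P. prob_space M \<and> poisson_pp M \<alpha> lam P \<longrightarrow>
               (AE \<omega> in M. infinite (gamma_component (insert (0, y) (P \<omega>)) (0, y)))))
       \<and> (\<alpha> > 1/2 \<longrightarrow>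
            (\<forall>y \<ge> 0. \<forall>(M :: 'a measure) P. prob_space M \<and> poisson_pp M \<alpha> lam P \<longrightarrow>
               \<not> (AE \<omega> in M. infinite (gamma_component (insert (0, y) (P \<omega>)) (0, y)))))"
  using part_i[OF assms] part_ii[OF _ assms(2)] by blast

end
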